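(* Let $n\in\mathbb{N}$ and let $q$ be a natural number with $q\ge n(n-1)/2$. Then the complete graph $K_n$ can be embedded in any projective plane of order $q$.
   Context: A finite projective plane of order $q$ has $q^2+q+1$ points and lines, $q+1$ points on each line and $q+1$ lines through each point; any two distinct points lie on a unique line and any two lines meet in a unique point. An embedding of a simple graph $G=(V,E)$ into a projective plane is an injective map $\phi$ from $V$ to the points such that the induced map sending an edge $ab$ to the line through $\phi(a),\phi(b)$ is injective on $E$. *)

theory Defs
  imports Main
begin

definition proj_plane_of_order :: "'p set \<Rightarrow> 'l set \<Rightarrow> ('p \<Rightarrow> 'l \<Rightarrow> bool) \<Rightarrow> nat \<Rightarrow> bool" where
  "proj_plane_of_order P L I q \<longleftrightarrow>
     finite P \<and> finite L \<and>
     card P = q^2 + q + 1 \<and> card L = q^2 + q + 1 \<and>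
     (\<forall>l\<in>L. card {p\<in>P. I p l} = q + 1) \<and>
     (\<forall>p\<in>P. card {l\<in>L. I p l} = q + 1) \<and>
     (\<forall>p\<in>P. \<forall>r\<in>P. p \<noteq> r \<longrightarrow> (\<exists>!l. l \<in> L \<and> I p l \<and> I r l)) \<and>
     (\<forall>l\<in>L. \<forall>m\<in>L. l \<noteq> m \<longrightarrow> (\<exists>!p. p \<in> P \<and> I p l \<and> I p m))"

definition simple_graph :: "'a set \<Rightarrow> 'a set set \<Rightarrow> bool" where
  "simple_graph V E \<longleftrightarrow> finite V \<and> (\<forall>e\<in>E. \<exists>a b. a \<in> V \<and> b \<in> V \<and> a \<noteq> b \<and> e = {a, b})"

definition edge_line :: "'l set \<Rightarrow> ('p \<Rightarrow> 'l \<Rightarrow> bool) \<Rightarrow> ('a \<Rightarrow> 'p) \<Rightarrow> 'a set \<Rightarrow> 'l" where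
  "edge_line L I \<phi> e = (THE l. l \<in> L \<and> (\<forall>v\<in>e. I (\<phi> v) l))"

definition graph_embedding ::
  "'p set \<Rightarrow> 'l set \<Rightarrow> ('p \<Rightarrow> 'l \<Rightarrow> bool) \<Rightarrow> 'a set \<Rightarrow> 'a set set \<Rightarrow> ('a \<Rightarrow> 'p) \<Rightarrow> bool" where
  "graph_embedding P L I V E \<phi> \<longleftrightarrow>
     \<phi> ` V \<subseteq> P \<and> inj_on \<phi> V \<and> inj_on (edge_line L I \<phi>) E"

definition complete_graph_edges :: "nat \<Rightarrow> nat set set" where
  "complete_graph_edges n = {{a, b} | a b. a < n \<and> b < n \<and> a \<noteq> b}"

end

theory Submission
  imports Defs
begin

lemma pairs_card: "card {(a::nat,b). a<b \<and> b<k} = k*(k-1) div 2"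
proof (induction k)
  case 0 then show ?case by simp
next
  case (Suc k)
  have eq: "{(a::nat,b). a<b \<and> b<Suc k} = {(a,b). a<b \<and> b<k} \<union> (\<lambda>a. (a,k)) ` {..<k}"
    by auto
  have fin: "finite {(a::nat,b). a<b \<and> b<k}"
    by (rule finite_subset[of _ "{..<k} \<times> {..<k}"]) auto
  have disj: "{(a::nat,b). a<b \<and> b<k} \<inter> (\<lambda>a. (a,k)) ` {..<k} = {}" by auto
  have "card {(a::nat,b). a<b \<and> b<Suc k} = k*(k-1) div 2 + k"
    unfolding eq using Suc fin disj by (simp add: card_Un_disjoint card_image inj_on_def)
  also have "\<dots> = Suc k * (Suc k - 1) div 2"
    by (cases k) (simp_all add: algebra_simps)
  finally show ?case .
qed

lemma pp_line:
  assumes "proj_plane_of_order P L I q" "p \<in> P" "r \<in> P" "p \<noteq> r"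
  shows "\<exists>!l. l \<in> L \<and> I p l \<and> I r l"
proof -
  have "\<forall>p\<in>P. \<forall>r\<in>P. p \<noteq> r \<longrightarrow> (\<exists>!l. l \<in> L \<and> I p l \<and> I r l)"
    using assms(1) unfolding proj_plane_of_order_def by simp
  then show ?thesis using assms(2-4) by simp
qed

definition arc :: "'p set \<Rightarrow> 'l set \<Rightarrow> ('p \<Rightarrow> 'l \<Rightarrow> bool) \<Rightarrow> (nat \<Rightarrow> 'p) \<Rightarrow> nat \<Rightarrow> bool" where
  "arc P L I \<phi> k \<longleftrightarrow> \<phi> ` {0..<k} \<subseteq> P \<and> inj_on \<phi> {0..<k} \<and>
     (\<forall>a b c. a<k \<longrightarrow> b<k \<longrightarrow> c<k \<longrightarrow> a\<noteq>b \<longrightarrow> a\<noteq>c \<longrightarrow> b\<noteq>c \<longrightarrow>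
        \<not>(\<exists>l\<in>L. I (\<phi> a) l \<and> I (\<phi> b) l \<and> I (\<phi> c) l))"

lemma arc_step:
  assumes pp: "proj_plane_of_order P L I q" and arc: "arc P L I \<phi> k"
    and kq: "Suc k * k div 2 \<le> q"
  shows "\<exists>\<psi>. arc P L I \<psi> (Suc k)"
proof -
  from pp have finP: "finite P" and cardP: "card P = q^2+q+1" and finL: "finite L"
    and lc: "\<forall>l\<in>L. card {p\<in>P. I p l} = q + 1"
    unfolding proj_plane_of_order_def by auto
  define Pairs where "Pairs = {(a::nat,b). a<b \<and> b<k}"
  define lf where "lf = (\<lambda>(a,b). THE l. l\<in>L \<and> I (\<phi> a) l \<and> I (\<phi> b) l)"
  define Lines where "Lines = {l\<in>L. \<exists>a b. a<k \<and> b<k \<and> a\<noteq>b \<and> I (\<phi> a) l \<and> I (\<phi> b) l}"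
  have Lsub: "Lines \<subseteq> lf ` Pairs"
  proof
    fix l assume "l \<in> Lines"
    then obtain a b where l: "l\<in>L" "a<k" "b<k" "a\<noteq>b" "I (\<phi> a) l" "I (\<phi> b) l"
      unfolding Lines_def by auto
    have arcs: "\<phi> ` {0..<k} \<subseteq> P" "inj_on \<phi> {0..<k}" using arc unfolding arc_def by auto
    have ab: "\<phi> a \<in> P" "\<phi> b \<in> P" "\<phi> a \<noteq> \<phi> b"
      using arcs(1) l inj_onD[OF arcs(2), of a b] by auto
    have uq: "\<exists>!l. l \<in> L \<and> I (\<phi> a) l \<and> I (\<phi> b) l" using pp_line[OF pp] ab by simp
    show "l \<in> lf ` Pairs"
    proof (cases "a < b")
      case True
      have "lf (a,b) = l" unfolding lf_def using uq l by (auto intro!: the1_equality)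
      then show ?thesis using True l unfolding Pairs_def by force
    next
      case False
      then have "b < a" using l by auto
      have "lf (b,a) = l" unfolding lf_def using uq l by (auto intro!: the1_equality)
      then show ?thesis using \<open>b<a\<close> l unfolding Pairs_def by force
    qed
  qed
  have finPairs: "finite Pairs" unfolding Pairs_def
    by (rule finite_subset[of _ "{..<k} \<times> {..<k}"]) auto
  have cL: "card Lines \<le> k*(k-1) div 2"
    using card_mono[OF finite_imageI[OF finPairs] Lsub] card_image_le[OF finPairs, of lf]
      pairs_card[of k] unfolding Pairs_def by linarith
  have finLines: "finite Lines" unfolding Lines_def using finL by auto
  define F where "F = \<phi> ` {0..<k} \<union> (\<Union>l\<in>Lines. {p\<in>P. I p l})"
  have c2: "card (\<Union>l\<in>Lines. {p\<in>P. I p l}) \<le> (\<Sum>l\<in>Lines. card {p\<in>P. I p l})"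
    by (rule card_UN_le[OF finLines])
  have "(\<Sum>l\<in>Lines. card {p\<in>P. I p l}) = card Lines * (q+1)"
    using lc unfolding Lines_def by simp
  then have c3: "card (\<Union>l\<in>Lines. {p\<in>P. I p l}) \<le> card Lines * (q+1)" using c2 by simp
  have cF: "card F \<le> k + card Lines * (q+1)"
    unfolding F_def using card_Un_le[of "\<phi> ` {0..<k}" "(\<Union>l\<in>Lines. {p\<in>P. I p l})"]
      card_image_le[of "{0..<k}" \<phi>] c3 by simp
  define m where "m = k*(k-1) div 2"
  have mk: "m + k \<le> q"
  proof -
    have "m + k = Suc k * k div 2" unfolding m_def by (cases k) (simp_all add: algebra_simps)
    then show ?thesis using kq by simp
  qed
  have "card Lines * (q+1) \<le> m*(q+1)" unfolding m_def by (rule mult_le_mono1[OF cL])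
  moreover have "m*(q+1) + k*(q+1) \<le> q*(q+1)"
    using mult_le_mono1[OF mk, of "q+1"] by (simp add: add_mult_distrib)
  moreover have "k \<le> k*(q+1)" by simp
  ultimately have "card F \<le> q*(q+1)" using cF by linarith
  then have "card F < card P" using cardP by (simp add: power2_eq_square algebra_simps)
  moreover have finF: "finite F" unfolding F_def using finP finLines by auto
  ultimately have "\<not> P \<subseteq> F"
    using card_mono[OF finF, of P] by linarith
  then obtain p where p: "p \<in> P" "p \<notin> F" by auto
  define \<psi> where "\<psi> = \<phi>(k := p)"
  have agree: "\<And>a. a < k \<Longrightarrow> \<psi> a = \<phi> a" unfolding \<psi>_def by simp
  have psik: "\<psi> k = p" unfolding \<psi>_def by simp
  have pnot: "\<And>a. a<k \<Longrightarrow> \<phi> a \<noteq> p" using p unfolding F_def by auto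
  have pline: "\<And>a b l. a<k \<Longrightarrow> b<k \<Longrightarrow> a\<noteq>b \<Longrightarrow> l\<in>L \<Longrightarrow> I (\<phi> a) l \<Longrightarrow> I (\<phi> b) l \<Longrightarrow> \<not> I p l"
    using p unfolding F_def Lines_def by blast
  have A1: "\<psi> ` {0..<Suc k} \<subseteq> P"
  proof
    fix y assume "y \<in> \<psi> ` {0..<Suc k}"
    then obtain x where x: "x < Suc k" "y = \<psi> x" by auto
    have s0: "\<phi> ` {0..<k} \<subseteq> P" using arc unfolding arc_def by simp
    show "y \<in> P"
    proof (cases "x < k")
      case True then show ?thesis using x agree s0 by auto
    next
      case False then have "x = k" using x by simp
      then show ?thesis using x psik p by simp
    qed
  qed
  have A2: "inj_on \<psi> {0..<Suc k}"
  proof -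
    have "inj_on \<phi> {0..<k}" using arc unfolding arc_def by simp
    then have "inj_on \<psi> {0..<k}" using agree by (simp add: inj_on_def)
    moreover have "\<psi> k \<notin> \<psi> ` {0..<k}"
    proof
      assume "\<psi> k \<in> \<psi> ` {0..<k}"
      then obtain a where a: "a < k" "\<psi> k = \<psi> a" by auto
      then have "\<phi> a = p" using agree psik by simp
      then show False using pnot a(1) by blast
    qed
    ultimately show ?thesis by (simp add: atLeast0_lessThan_Suc)
  qed
  have old: "\<And>a b c l. a<k \<Longrightarrow> b<k \<Longrightarrow> c<k \<Longrightarrow> a\<noteq>b \<Longrightarrow> a\<noteq>c \<Longrightarrow> b\<noteq>c \<Longrightarrow> l\<in>L \<Longrightarrow>
     I (\<phi> a) l \<Longrightarrow> I (\<phi> b) l \<Longrightarrow> I (\<phi> c) l \<Longrightarrow> False"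
    using arc unfolding arc_def by blast
  have A3: "\<forall>a b c. a<Suc k \<longrightarrow> b<Suc k \<longrightarrow> c<Suc k \<longrightarrow> a\<noteq>b \<longrightarrow> a\<noteq>c \<longrightarrow> b\<noteq>c \<longrightarrow>
        \<not>(\<exists>l\<in>L. I (\<psi> a) l \<and> I (\<psi> b) l \<and> I (\<psi> c) l)"
  proof (intro allI impI notI)
    fix a b c assume h: "a<Suc k" "b<Suc k" "c<Suc k" "a\<noteq>b" "a\<noteq>c" "b\<noteq>c"
      and "\<exists>l\<in>L. I (\<psi> a) l \<and> I (\<psi> b) l \<and> I (\<psi> c) l"
    then obtain l where l: "l\<in>L" "I (\<psi> a) l" "I (\<psi> b) l" "I (\<psi> c) l" by blast
    show False
    proof (cases "a = k")
      case True
      then have "b<k" "c<k" using h by auto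
      then show ?thesis using pline[of b c l] l h True agree psik by auto
    next
      case a: False
      show ?thesis
      proof (cases "b = k")
        case True
        then have "a<k" "c<k" using h by auto
        then show ?thesis using pline[of a c l] l h True agree psik by auto
      next
        case b: False
        show ?thesis
        proof (cases "c = k")
          case True
          then have "a<k" "b<k" using h a by auto
          then show ?thesis using pline[of a b l] l h True agree psik by auto
        next
          case False
          then have "a<k" "b<k" "c<k" using h a b by auto
          then show ?thesis using old[of a b c l] l h agree by auto
        qed
      qed
    qed
  qed
  show ?thesis using A1 A2 A3 unfolding arc_def by blast
qed

lemma arc_exists:
  assumes pp: "proj_plane_of_order P L I q" and "k * (k - 1) div 2 \<le> q"
  shows "\<exists>\<phi>. arc P L I \<phi> k"
  using assms(2)
proof (induction k)
  case 0 then show ?case unfolding arc_def by auto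
next
  case (Suc k)
  have "k * (k - 1) div 2 \<le> Suc k * (Suc k - 1) div 2"
    by (intro div_le_mono mult_le_mono) auto
  then obtain \<phi> where "arc P L I \<phi> k" using Suc by auto
  moreover have "Suc k * k div 2 \<le> q" using Suc.prems by simp
  ultimately show ?case using arc_step[OF pp] by blast
qed

theorem theorem2p15:
  fixes P :: "'p set" and L :: "'l set" and I :: "'p \<Rightarrow> 'l \<Rightarrow> bool" and n q :: nat
  assumes "proj_plane_of_order P L I q"
    and "n * (n - 1) div 2 \<le> q"
  shows "\<exists>\<phi>. graph_embedding P L I {0..<n} (complete_graph_edges n) \<phi>"
proof -
  obtain \<phi> where arc: "arc P L I \<phi> n" using arc_exists[OF assms] by blast
  have sub: "\<phi> ` {0..<n} \<subseteq> P" and inj: "inj_on \<phi> {0..<n}" using arc unfolding arc_def by auto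
  have el: "edge_line L I \<phi> {a,b} \<in> L \<and> I (\<phi> a) (edge_line L I \<phi> {a,b}) \<and> I (\<phi> b) (edge_line L I \<phi> {a,b})"
    if "a<n" "b<n" "a\<noteq>b" for a b
  proof -
    have ab: "\<phi> a \<in> P" "\<phi> b \<in> P" "\<phi> a \<noteq> \<phi> b"
      using sub that inj_onD[OF inj, of a b] by auto
    have uq: "\<exists>!l. l \<in> L \<and> I (\<phi> a) l \<and> I (\<phi> b) l"
      using pp_line[OF assms(1)] ab by simp
    have "edge_line L I \<phi> {a,b} = (THE l. l \<in> L \<and> I (\<phi> a) l \<and> I (\<phi> b) l)"
      unfolding edge_line_def by simp
    then show ?thesis using theI'[OF uq] by simp
  qed
  have "inj_on (edge_line L I \<phi>) (complete_graph_edges n)"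
  proof (rule inj_onI)
    fix e1 e2 assume e1: "e1 \<in> complete_graph_edges n" and e2: "e2 \<in> complete_graph_edges n"
      and eq: "edge_line L I \<phi> e1 = edge_line L I \<phi> e2"
    obtain a b where ab: "a<n" "b<n" "a\<noteq>b" "e1 = {a,b}" using e1 unfolding complete_graph_edges_def by auto
    obtain c d where cd: "c<n" "d<n" "c\<noteq>d" "e2 = {c,d}" using e2 unfolding complete_graph_edges_def by auto
    define l where "l = edge_line L I \<phi> e1"
    have l: "l \<in> L" "I (\<phi> a) l" "I (\<phi> b) l" "I (\<phi> c) l" "I (\<phi> d) l"
      using el[OF ab(1-3)] el[OF cd(1-3)] ab cd eq unfolding l_def by auto
    have nc: "\<And>x y z. x<n \<Longrightarrow> y<n \<Longrightarrow> z<n \<Longrightarrow> x\<noteq>y \<Longrightarrow> x\<noteq>z \<Longrightarrow> y\<noteq>z \<Longrightarrow> l\<in>L \<Longrightarrow>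
       I (\<phi> x) l \<Longrightarrow> I (\<phi> y) l \<Longrightarrow> I (\<phi> z) l \<Longrightarrow> False"
      using arc unfolding arc_def by blast
    show "e1 = e2"
    proof (rule ccontr)
      assume "e1 \<noteq> e2"
      then have "c \<notin> {a,b} \<or> d \<notin> {a,b}" using ab cd by auto
      then show False
      proof
        assume "c \<notin> {a,b}" then show False using nc[of a b c] ab cd l by auto
      next
        assume "d \<notin> {a,b}" then show False using nc[of a b d] ab cd l by auto
      qed
    qed
  qed
  then show ?thesis using sub inj unfolding graph_embedding_def by blast
qed

end
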